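(* Let $f$ be a multiplicative function from the positive integers to the nonnegative integers with $f(p^{k-1})\le f(p^k)$ for all primes $p$ and integers $k\ge1$. Every positive integer is $f$-practical if and only if $$f(p^k)\le S_f(p^{k-1})+1$$ holds for every prime $p$ and every integer $k\ge1$.
   Context: $f$ multiplicative means $f(1)=1$ and $f(ab)=f(a)f(b)$ for coprime $a,b$. $S_f(n)=\sum_{d\mid n} f(d)$. A positive integer $n$ is $f$-practical if every positive integer $m\le S_f(n)$ equals $\sum_{d\in\mathcal{D}}f(d)$ for some set $\mathcal{D}$ of distinct divisors of $n$. *)

theory Defs
  imports "HOL-Computational_Algebra.Primes"
begin

definition multiplicative_fun :: "(nat \<Rightarrow> nat) \<Rightarrow> bool" where
  "multiplicative_fun f \<longleftrightarrow> f 1 = 1 \<and>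
     (\<forall>a b. 0 < a \<longrightarrow> 0 < b \<longrightarrow> coprime a b \<longrightarrow> f (a * b) = f a * f b)"

definition S_f :: "(nat \<Rightarrow> nat) \<Rightarrow> nat \<Rightarrow> nat" where
  "S_f f n = (\<Sum>d \<in> {d. d dvd n}. f d)"

definition f_practical :: "(nat \<Rightarrow> nat) \<Rightarrow> nat \<Rightarrow> bool" where
  "f_practical f n \<longleftrightarrow>
     (\<forall>m. 1 \<le> m \<and> m \<le> S_f f n \<longrightarrow>
        (\<exists>D. D \<subseteq> {d. d dvd n} \<and> m = (\<Sum>d \<in> D. f d)))"

end

theory Submission
  imports Defs
begin

definition P' :: "(nat \<Rightarrow> nat) \<Rightarrow> nat \<Rightarrow> bool" where
  "P' f n \<longleftrightarrow> (\<forall>x \<le> S_f f n. \<exists>D \<subseteq> {d. d dvd n}. x = sum f D)"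

lemma P'_iff: "f_practical f n \<longleftrightarrow> P' f n"
  unfolding f_practical_def P'_def
proof safe
  fix x assume H: "\<forall>m. 1 \<le> m \<and> m \<le> S_f f n \<longrightarrow> (\<exists>D\<subseteq>{d. d dvd n}. m = sum f D)"
    and x: "x \<le> S_f f n"
  show "\<exists>D\<subseteq>{d. d dvd n}. x = sum f D"
  proof (cases "x = 0")
    case True then show ?thesis by (intro exI[of _ "{}"]) auto
  next
    case False then show ?thesis using H x by auto
  qed
qed auto

lemma divs_split:
  fixes m p :: nat
  assumes p: "prime p" and cop: "coprime m p" and m: "m > 0"
  shows "{e. e dvd m*p^Suc j} = {e. e dvd m*p^j} \<union> (\<lambda>d. d*p^Suc j) ` {d. d dvd m}"
proof (intro equalityI subsetI)
  fix e assume "e \<in> {e. e dvd m*p^Suc j}"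
  then have "e dvd m*p^Suc j" by simp
  then obtain b c where e: "e = b*c" "b dvd m" "c dvd p^Suc j" using division_decomp by blast
  then obtain i where i: "i \<le> Suc j" "c = p^i" using divides_primepow_nat[OF p] by blast
  show "e \<in> {e. e dvd m*p^j} \<union> (\<lambda>d. d*p^Suc j) ` {d. d dvd m}"
  proof (cases "i = Suc j")
    case True then show ?thesis using e i by auto
  next
    case False
    then have "i \<le> j" using i by simp
    then have "c dvd p^j" using i by (simp add: le_imp_power_dvd)
    then have "e dvd m*p^j" using e by (simp add: mult_dvd_mono)
    then show ?thesis by simp
  qed
next
  fix e assume "e \<in> {e. e dvd m*p^j} \<union> (\<lambda>d. d*p^Suc j) ` {d. d dvd m}"
  then show "e \<in> {e. e dvd m*p^Suc j}"
    by (auto intro: dvd_trans[of _ "m*p^j"] mult_dvd_mono)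
qed

lemma divs_disj:
  fixes m p :: nat
  assumes p: "prime p" and cop: "coprime m p" and m: "m > 0"
  shows "{e. e dvd m*p^j} \<inter> (\<lambda>d. d*p^Suc j) ` {d. d dvd m} = {}"
proof (rule ccontr)
  assume "\<not> ?thesis"
  then obtain d where "d*p^Suc j dvd m*p^j" by blast
  then have "p^j * p dvd p^j * m" by (metis dvd_mult_left mult.commute power_Suc2)
  then have "p dvd m" using p by (simp add: prime_gt_0_nat)
  then show False using cop p by (metis coprime_absorb_right not_prime_unit coprime_commute)
qed

lemma step:
  fixes f :: "nat \<Rightarrow> nat" and m p :: nat
  assumes mult: "multiplicative_fun f" and p: "prime p" and cop: "coprime m p" and m: "m > 0"
    and Pj: "P' f (m*p^j)" and Pm: "P' f m"
    and cond: "f (p^Suc j) \<le> S_f f (p^j) + 1"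
  shows "P' f (m*p^Suc j)"
proof -
  define w where "w = f (p^Suc j)"
  define M where "M = S_f f m"
  define A where "A = S_f f (m*p^j)"
  have pp: "p > 0" using p prime_gt_0_nat by blast
  have fin1: "finite {e. e dvd m*p^j}" using m pp by simp
  have finm: "finite {d. d dvd m}" using m by simp
  have inj: "inj_on (\<lambda>d. d*p^Suc j) X" for X using pp by (auto simp: inj_on_def)
  have fmul: "f (d*p^Suc j) = f d * w" if "d dvd m" for d
  proof -
    have "coprime d p" using that cop coprime_imp_coprime by (meson coprime_def dvd_trans)
    then have "coprime d (p^Suc j)" by simp
    moreover have "d > 0" using that m by (auto intro: Nat.gr0I)
    ultimately show ?thesis using mult pp unfolding multiplicative_fun_def w_def by simp
  qed
  have sumimg: "sum f ((\<lambda>d. d*p^Suc j) ` D) = w * sum f D" if "D \<subseteq> {d. d dvd m}" for D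
  proof -
    have "sum f ((\<lambda>d. d*p^Suc j) ` D) = sum (\<lambda>d. f (d*p^Suc j)) D"
      by (subst sum.reindex[OF inj]) simp
    also have "\<dots> = sum (\<lambda>d. f d * w) D" using that fmul by (intro sum.cong) auto
    finally show ?thesis by (simp add: sum_distrib_left mult.commute)
  qed
  have Sn: "S_f f (m*p^Suc j) = A + w*M"
  proof -
    have "S_f f (m*p^Suc j) = sum f ({e. e dvd m*p^j} \<union> (\<lambda>d. d*p^Suc j) ` {d. d dvd m})"
      unfolding S_f_def using divs_split[OF p cop m] by simp
    also have "\<dots> = A + sum f ((\<lambda>d. d*p^Suc j) ` {d. d dvd m})"
      unfolding A_def S_f_def
      by (rule sum.union_disjoint[OF fin1 finite_imageI[OF finm] divs_disj[OF p cop m]])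
    finally show ?thesis using sumimg[of "{d. d dvd m}"] M_def S_f_def by simp
  qed
  have Ab: "S_f f (p^j) \<le> A"
    unfolding A_def S_f_def
    by (rule sum_mono2[OF fin1]) auto
  show ?thesis unfolding P'_def
  proof (intro allI impI)
    fix x assume x: "x \<le> S_f f (m*p^Suc j)"
    define c where "c = min M (x div w)"
    have cw: "c*w \<le> x"
    proof -
      have "c*w \<le> (x div w)*w" unfolding c_def by simp
      also have "\<dots> \<le> x" by simp
      finally show ?thesis .
    qed
    have r: "x - c*w \<le> A"
    proof (cases "c = M")
      case True then show ?thesis using x Sn by (simp add: mult.commute)
    next
      case False
      then have c: "c = x div w" unfolding c_def by (simp add: min_def split: if_splits)
      show ?thesis
      proof (cases "w = 0")
        case True then show ?thesis using x Sn c by simp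
      next
        case False
        have "x - c*w = x mod w" using c by (simp add: minus_div_mult_eq_mod)
        also have "\<dots> < w" using False by simp
        finally show ?thesis using cond Ab w_def by simp
      qed
    qed
    have cM: "c \<le> M" unfolding c_def by simp
    obtain D1 where D1: "D1 \<subseteq> {d. d dvd m*p^j}" "x - c*w = sum f D1"
      using Pj r unfolding P'_def A_def by blast
    obtain D2 where D2: "D2 \<subseteq> {d. d dvd m}" "c = sum f D2"
      using Pm cM unfolding P'_def M_def by blast
    have finD1: "finite D1" using D1 fin1 finite_subset by blast
    have finD2: "finite D2" using D2 finm finite_subset by blast
    have disj: "D1 \<inter> (\<lambda>d. d*p^Suc j) ` D2 = {}" using divs_disj[OF p cop m, of j] D1 D2 by blast
    have "sum f (D1 \<union> (\<lambda>d. d*p^Suc j) ` D2) = sum f D1 + sum f ((\<lambda>d. d*p^Suc j) ` D2)"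
      by (rule sum.union_disjoint[OF finD1 finite_imageI[OF finD2] disj])
    also have "\<dots> = (x - c*w) + w*c" using D1 D2 sumimg by simp
    also have "\<dots> = x" using cw by (simp add: mult.commute)
    finally have "x = sum f (D1 \<union> (\<lambda>d. d*p^Suc j) ` D2)" by simp
    moreover have "D1 \<union> (\<lambda>d. d*p^Suc j) ` D2 \<subseteq> {d. d dvd m*p^Suc j}"
      using D1 D2 divs_split[OF p cop m, of j] by blast
    ultimately show "\<exists>D\<subseteq>{d. d dvd m*p^Suc j}. x = sum f D" by blast
  qed
qed

theorem theorem2p7:
  fixes f :: "nat \<Rightarrow> nat"
  assumes mult: "multiplicative_fun f"
    and mono: "\<And>p k. prime p \<Longrightarrow> k \<ge> 1 \<Longrightarrow> f (p ^ (k - 1)) \<le> f (p ^ k)"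
  shows "(\<forall>n. n > 0 \<longrightarrow> f_practical f n) \<longleftrightarrow>
         (\<forall>p k. prime p \<longrightarrow> k \<ge> 1 \<longrightarrow> f (p ^ k) \<le> S_f f (p ^ (k - 1)) + 1)"
proof
  assume H: "\<forall>n. n > 0 \<longrightarrow> f_practical f n"
  show "\<forall>p k. prime p \<longrightarrow> k \<ge> 1 \<longrightarrow> f (p ^ k) \<le> S_f f (p ^ (k - 1)) + 1"
  proof (intro allI impI, rule ccontr)
    fix p k :: nat assume p: "prime p" and k: "k \<ge> 1" and nc: "\<not> f (p ^ k) \<le> S_f f (p ^ (k - 1)) + 1"
    obtain j where kj: "k = Suc j" using k by (cases k) auto
    have pp: "p > 0" using p prime_gt_0_nat by blast
    have cop: "coprime (1::nat) p" by simp
    have split: "{e. e dvd p^Suc j} = {e. e dvd p^j} \<union> {p^Suc j}"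
      using divs_split[OF p cop, of j] by simp
    have disj: "p^Suc j \<notin> {e. e dvd p^j}"
      using divs_disj[OF p cop, of j] by auto
    have fin: "finite {e. e dvd p^j}" using pp by simp
    have S: "S_f f (p^Suc j) = S_f f (p^j) + f (p^Suc j)"
      unfolding S_f_def split using fin disj by simp
    define x where "x = S_f f (p^j) + 1"
    have "f_practical f (p^Suc j)" using H pp by simp
    then have "P' f (p^Suc j)" by (simp add: P'_iff)
    moreover have "x \<le> S_f f (p^Suc j)" using S nc kj x_def by simp
    ultimately obtain D where D: "D \<subseteq> {e. e dvd p^Suc j}" "x = sum f D"
      unfolding P'_def by blast
    have finD: "finite D" using D(1) split fin finite_subset by auto
    show False
    proof (cases "p^Suc j \<in> D")
      case True
      have "f (p^Suc j) \<le> sum f D" by (rule member_le_sum[OF True _ finD]) auto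
      then show False using D nc kj x_def by simp
    next
      case False
      then have "D \<subseteq> {e. e dvd p^j}" using D(1) split by auto
      then have "sum f D \<le> S_f f (p^j)" unfolding S_f_def by (rule sum_mono2[OF fin]) auto
      then show False using D x_def by simp
    qed
  qed
next
  assume C: "\<forall>p k. prime p \<longrightarrow> k \<ge> 1 \<longrightarrow> f (p ^ k) \<le> S_f f (p ^ (k - 1)) + 1"
  have "n > 0 \<longrightarrow> P' f n" for n
  proof (induction n rule: less_induct)
    case (less n)
    show ?case
    proof (intro impI)
      assume n: "n > 0"
      show "P' f n"
      proof (cases "n = 1")
        case True
        have "S_f f 1 = 1" using mult unfolding S_f_def multiplicative_fun_def by simp
        then show ?thesis unfolding P'_def True
        proof (intro allI impI)
          fix x :: nat assume "S_f f 1 = 1" "x \<le> S_f f 1"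
          then have "x = 0 \<or> x = 1" by auto
          then show "\<exists>D\<subseteq>{d. d dvd 1}. x = sum f D"
          proof
            assume "x = 0" then show ?thesis by (intro exI[of _ "{}"]) auto
          next
            assume "x = 1" then show ?thesis using mult unfolding multiplicative_fun_def
              by (intro exI[of _ "{1}"]) auto
          qed
        qed
      next
        case False
        then obtain p where p: "prime p" "p dvd n" using prime_factor_nat by blast
        define k where "k = multiplicity p n"
        obtain m where nm: "n = p^k * m" and pm: "\<not> p dvd m"
          using multiplicity_decompose'[of n p] k_def n p(1) not_prime_unit by blast
        have k1: "k \<ge> 1" using p(2) k_def multiplicity_gt_zero_iff[of n p] n p(1) prime_gt_1_nat[OF p(1)] by (simp add: Suc_le_eq)
        have pp: "p > 1" using p prime_gt_1_nat by blast
        have m0: "m > 0" using nm n by auto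
        have "p^k > 1" using pp k1 by (intro one_less_power) auto
        then have mn: "m < n" using nm m0 by simp
        have Pm: "P' f m" using less mn m0 by blast
        have cop: "coprime m p" using pm p(1) by (metis coprime_commute prime_imp_coprime)
        have "P' f (m*p^j)" for j
        proof (induction j)
          case 0 then show ?case using Pm by simp
        next
          case (Suc j)
          have "f (p^Suc j) \<le> S_f f (p^j) + 1" using C p(1) by (metis diff_Suc_1 Suc_le_mono zero_le One_nat_def)
          then show ?case using step[OF mult p(1) cop m0 Suc Pm] by simp
        qed
        then show ?thesis using nm by (simp add: mult.commute)
      qed
    qed
  qed
  then show "\<forall>n. n > 0 \<longrightarrow> f_practical f n" by (simp add: P'_iff)
qed

end
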